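(* For every ProbNetKAT program $p$, the matrix $\mathcal{S}[\![p]\!]$ indexed by $2^{\mathsf{Pk}}\times 2^{\mathsf{Pk}}$ is (right-)stochastic: all entries are nonnegative and each row sums to $1$.
   Context: $\mathsf{Pk}$ is a finite set of packets (records of finitely many fields with finitely many values). For each ProbNetKAT program $p$, $\mathcal{B}[\![p]\!]\in[0,1]^{2^{\mathsf{Pk}}\times 2^{\mathsf{Pk}}}$ denotes its matrix semantics, defined compositionally ($[\varphi]$ = Iverson bracket): $\mathcal{B}[\![\mathsf{false}]\!]_{ab}=[b=\emptyset]$; $\mathcal{B}[\![\mathsf{true}]\!]_{ab}=[a=b]$; $\mathcal{B}[\![f=n]\!]_{ab}=[b=\{\pi\in a:\pi.f=n\}]$; $\mathcal{B}[\![\neg t]\!]_{ab}=[b\subseteq a]\mathcal{B}[\![t]\!]_{a,a-b}$; $\mathcal{B}[\![f\leftarrow n]\!]_{ab}=[b=\{\pi[f:=n]:\pi\in a\}]$; $\mathcal{B}[\![p\,\&\,q]\!]_{ab}=\sum_{c,d}[c\cup d=b]\mathcal{B}[\![p]\!]_{ac}\mathcal{B}[\![q]\!]_{ad}$; $\mathcal{B}[\![p;q]\!]=\mathcal{B}[\![p]\!]\mathcal{B}[\![q]\!]$; $\mathcal{B}[\![p\oplus_r q]\!]=r\mathcal{B}[\![p]\!]+(1-r)\mathcal{B}[\![q]\!]$; $\mathcal{B}[\![p^*]\!]_{ab}=\lim_n\mathcal{B}[\![p^{(n)}]\!]_{ab}$, where $p^{(0)}=\mathsf{true}$, $p^{(n+1)}=\mathsf{true}\,\&\,(p;p^{(n)})$.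 (Here $\&$ is union and $;$ sequencing; for predicates, $\&$ is disjunction and $;$ conjunction.) The small-step matrix is $\mathcal{S}[\![p]\!]_{(a,b),(a',b')} := [b'=b\cup a]\cdot\mathcal{B}[\![p]\!]_{a,a'}$ for $a,b,a',b'\subseteq\mathsf{Pk}$. *)

theory Defs
  imports Complex_Main
begin

text \<open>Packets are records with fields of (finite) type 'f and values of (finite) type 'v,
  i.e. functions 'f => 'v; Pk is UNIV of that type.\<close>

type_synonym ('f,'v) pk = "'f \<Rightarrow> 'v"
type_synonym ('f,'v) mat = "('f,'v) pk set \<Rightarrow> ('f,'v) pk set \<Rightarrow> real"

datatype ('f,'v) pred =
    PFalse
  | PTrue
  | Test 'f 'v
  | Neg "('f,'v) pred"
  | PDisj "('f,'v) pred" "('f,'v) pred"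
  | PConj "('f,'v) pred" "('f,'v) pred"

datatype ('f,'v) prog =
    Filter "('f,'v) pred"
  | Assign 'f 'v
  | Par "('f,'v) prog" "('f,'v) prog"
  | Seq "('f,'v) prog" "('f,'v) prog"
  | Choice "('f,'v) prog" real "('f,'v) prog"
  | Star "('f,'v) prog"

fun wf_prog :: "('f,'v) prog \<Rightarrow> bool" where
  "wf_prog (Filter t) = True"
| "wf_prog (Assign f n) = True"
| "wf_prog (Par p q) = (wf_prog p \<and> wf_prog q)"
| "wf_prog (Seq p q) = (wf_prog p \<and> wf_prog q)"
| "wf_prog (Choice p r q) = (0 \<le> r \<and> r \<le> 1 \<and> wf_prog p \<and> wf_prog q)"
| "wf_prog (Star p) = wf_prog p"

definition mat_id :: "('f::finite,'v::finite) mat" where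
  "mat_id a b = of_bool (a = b)"

definition mat_mult :: "('f::finite,'v::finite) mat \<Rightarrow> ('f,'v) mat \<Rightarrow> ('f,'v) mat" where
  "mat_mult A B a b = (\<Sum>c\<in>UNIV. A a c * B c b)"

definition mat_par :: "('f::finite,'v::finite) mat \<Rightarrow> ('f,'v) mat \<Rightarrow> ('f,'v) mat" where
  "mat_par A B a b = (\<Sum>(c,d)\<in>UNIV. of_bool (c \<union> d = b) * A a c * B a d)"

fun Bpred :: "('f::finite,'v::finite) pred \<Rightarrow> ('f,'v) mat" where
  "Bpred PFalse a b = of_bool (b = {})"
| "Bpred PTrue a b = of_bool (a = b)"
| "Bpred (Test f n) a b = of_bool (b = {\<pi>\<in>a. \<pi> f = n})"
| "Bpred (Neg t) a b = of_bool (b \<subseteq> a) * Bpred t a (a - b)"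
| "Bpred (PDisj t u) a b = mat_par (Bpred t) (Bpred u) a b"
| "Bpred (PConj t u) a b = mat_mult (Bpred t) (Bpred u) a b"

fun star_approx :: "('f::finite,'v::finite) mat \<Rightarrow> nat \<Rightarrow> ('f,'v) mat" where
  "star_approx P 0 = mat_id"
| "star_approx P (Suc n) = mat_par mat_id (mat_mult P (star_approx P n))"

fun B :: "('f::finite,'v::finite) prog \<Rightarrow> ('f,'v) mat" where
  "B (Filter t) = Bpred t"
| "B (Assign f n) = (\<lambda>a b. of_bool (b = (\<lambda>\<pi>. \<pi>(f := n)) ` a))"
| "B (Par p q) = mat_par (B p) (B q)"
| "B (Seq p q) = mat_mult (B p) (B q)"
| "B (Choice p r q) = (\<lambda>a b. r * B p a b + (1 - r) * B q a b)"
| "B (Star p) = (\<lambda>a b. lim (\<lambda>n. star_approx (B p) n a b))"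

definition S :: "('f::finite,'v::finite) prog \<Rightarrow> ('f,'v) pk set \<times> ('f,'v) pk set
                 \<Rightarrow> ('f,'v) pk set \<times> ('f,'v) pk set \<Rightarrow> real" where
  "S p = (\<lambda>(a,b) (a',b'). of_bool (b' = b \<union> a) * B p a a')"

end

theory Submission
  imports Defs
begin

definition stoch :: "('f::finite,'v::finite) mat \<Rightarrow> bool" where
  "stoch M \<longleftrightarrow> (\<forall>a b. 0 \<le> M a b) \<and> (\<forall>a. (\<Sum>b\<in>UNIV. M a b) = 1)"

lemma stoch_id: "stoch (mat_id :: ('f::finite,'v::finite) mat)"
  unfolding stoch_def mat_id_def by simp

lemma sum_of_bool_eq: "(\<Sum>b\<in>(UNIV::'a::finite set). of_bool (x = b) * (f b::real)) = f x"
proof -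
  have "(\<lambda>b. of_bool (x = b) * f b) = (\<lambda>b. if x = b then f b else 0)" by auto
  then show ?thesis by simp
qed

lemma sum_of_bool_eq': "(\<Sum>b\<in>(UNIV::'a::finite set). (of_bool (x = b)::real)) = 1"
  using sum_of_bool_eq[of x "\<lambda>_. 1"] by simp

lemma stoch_mult:
  assumes "stoch M" "stoch N" shows "stoch (mat_mult M N)"
proof -
  have nn: "0 \<le> mat_mult M N a b" for a b
    using assms unfolding stoch_def mat_mult_def by (auto intro!: sum_nonneg)
  have "(\<Sum>b\<in>UNIV. mat_mult M N a b) = 1" for a
  proof -
    have "(\<Sum>b\<in>UNIV. mat_mult M N a b) = (\<Sum>c\<in>UNIV. M a c * (\<Sum>b\<in>UNIV. N c b))"
      unfolding mat_mult_def sum_distrib_left by (rule sum.swap)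
    also have "\<dots> = 1" using assms unfolding stoch_def by simp
    finally show ?thesis .
  qed
  with nn show ?thesis unfolding stoch_def by blast
qed

lemma stoch_par:
  assumes "stoch M" "stoch N" shows "stoch (mat_par M N)"
proof -
  have nn: "0 \<le> mat_par M N a b" for a b
    using assms unfolding stoch_def mat_par_def by (auto intro!: sum_nonneg)
  have "(\<Sum>b\<in>UNIV. mat_par M N a b) = 1" for a
  proof -
    have "(\<Sum>b\<in>UNIV. mat_par M N a b) = (\<Sum>p\<in>UNIV. (\<Sum>b\<in>UNIV. of_bool (fst p \<union> snd p = b)) * M a (fst p) * N a (snd p))"
      unfolding mat_par_def case_prod_beta sum_distrib_right by (rule sum.swap)
    also have "\<dots> = (\<Sum>(c,d)\<in>UNIV. M a c * N a d)"
      unfolding sum_of_bool_eq' case_prod_beta by simp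
    also have "\<dots> = (\<Sum>c\<in>UNIV. M a c) * (\<Sum>d\<in>UNIV. N a d)"
      unfolding sum_product sum.cartesian_product UNIV_Times_UNIV by simp
    also have "\<dots> = 1" using assms unfolding stoch_def by simp
    finally show ?thesis .
  qed
  with nn show ?thesis unfolding stoch_def by blast
qed

lemma stoch_choice:
  assumes "stoch M" "stoch N" "0 \<le> r" "r \<le> 1"
  shows "stoch (\<lambda>a b. r * M a b + (1 - r) * N a b)"
  using assms unfolding stoch_def by (simp add: sum.distrib sum_distrib_left[symmetric])

lemma sum_of_bool_eq2: "(\<Sum>b\<in>(UNIV::'a::finite set). (of_bool (b = x)::real)) = 1"
  using sum_of_bool_eq'[of x] by (simp add: eq_commute)

lemma neg_sum:
  fixes T :: "('f::finite,'v::finite) mat"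
  assumes supp: "\<And>b. T a b \<noteq> 0 \<Longrightarrow> b \<subseteq> a"
  shows "(\<Sum>b\<in>UNIV. of_bool (b \<subseteq> a) * T a (a - b)) = (\<Sum>b\<in>UNIV. T a b)"
proof -
  have "(\<Sum>b\<in>UNIV. of_bool (b \<subseteq> a) * T a (a - b)) = (\<Sum>b\<in>Pow a. T a (a - b))"
    by (rule sum.mono_neutral_cong_right) auto
  also have "\<dots> = (\<Sum>c\<in>Pow a. T a c)"
  proof (rule sum.reindex_bij_witness[where i="\<lambda>c. a - c" and j="\<lambda>b. a - b"]) 
  qed auto
  also have "\<dots> = (\<Sum>b\<in>UNIV. T a b)"
    by (rule sum.mono_neutral_cong_left) (auto dest: supp)
  finally show ?thesis .
qed

lemma Bpred_props:
  "stoch (Bpred t) \<and> (\<forall>a b. Bpred t a b \<noteq> 0 \<longrightarrow> b \<subseteq> a)"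
proof (induction t)
  case PFalse
  then show ?case unfolding stoch_def by (simp add: sum_of_bool_eq2)
next
  case PTrue
  then show ?case unfolding stoch_def by (simp add: sum_of_bool_eq')
next
  case (Test f n)
  then show ?case unfolding stoch_def by (auto simp: sum_of_bool_eq2)
next
  case (Neg t)
  have "(\<Sum>b\<in>UNIV. Bpred (Neg t) a b) = 1" for a
    using Neg neg_sum[of "Bpred t" a] unfolding stoch_def by simp
  then show ?case using Neg unfolding stoch_def by auto
next
  case (PDisj t u)
  have "Bpred (PDisj t u) = mat_par (Bpred t) (Bpred u)" by (intro ext) simp
  then have "stoch (Bpred (PDisj t u))" using PDisj stoch_par by auto
  moreover have "Bpred (PDisj t u) a b = 0" if "\<not> b \<subseteq> a" for a b
    unfolding Bpred.simps mat_par_def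
  proof (rule sum.neutral, clarify)
    fix c d
    show "of_bool (c \<union> d = b) * Bpred t a c * Bpred u a d = 0"
    proof -
      have "c \<union> d \<noteq> b \<or> Bpred t a c = 0 \<or> Bpred u a d = 0" using PDisj that by blast
      then show ?thesis by auto
    qed
  qed
  ultimately show ?case by blast
next
  case (PConj t u)
  have "Bpred (PConj t u) = mat_mult (Bpred t) (Bpred u)" by (intro ext) simp
  then have "stoch (Bpred (PConj t u))" using PConj stoch_mult by auto
  moreover have "Bpred (PConj t u) a b = 0" if "\<not> b \<subseteq> a" for a b
    unfolding Bpred.simps mat_mult_def
  proof (rule sum.neutral, clarify)
    fix c
    show "Bpred t a c * Bpred u c b = 0"
    proof -
      have "Bpred t a c = 0 \<or> Bpred u c b = 0" using PConj that by blast
      then show ?thesis by auto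
    qed
  qed
  ultimately show ?case by blast
qed


lemma stoch_star_approx: "stoch P \<Longrightarrow> stoch (star_approx P n)"
  by (induction n) (auto intro: stoch_par stoch_mult stoch_id)

lemma par_id: "mat_par mat_id M a c = (\<Sum>d\<in>UNIV. of_bool (a \<union> d = c) * M a d)"
proof -
  have "mat_par mat_id M a c = (\<Sum>c1\<in>UNIV. \<Sum>d\<in>UNIV. of_bool (c1 \<union> d = c) * mat_id a c1 * M a d)"
    unfolding mat_par_def sum.cartesian_product UNIV_Times_UNIV ..
  also have "\<dots> = (\<Sum>c1\<in>UNIV. of_bool (a = c1) * (\<Sum>d\<in>UNIV. of_bool (c1 \<union> d = c) * M a d))"
    unfolding mat_id_def sum_distrib_left by (intro sum.cong refl) (simp add: mult_ac)
  also have "\<dots> = (\<Sum>d\<in>UNIV. of_bool (a \<union> d = c) * M a d)"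
    by (rule sum_of_bool_eq)
  finally show ?thesis .
qed

definition U :: "('f::finite,'v::finite) mat \<Rightarrow> nat \<Rightarrow> ('f,'v) mat" where
  "U P n a b = (\<Sum>c\<in>UNIV. of_bool (b \<subseteq> c) * star_approx P n a c)"

lemma U_0: "U P 0 a b = of_bool (b \<subseteq> a)"
  unfolding U_def by (simp add: mat_id_def sum_of_bool_eq[of a "\<lambda>c. of_bool (b \<subseteq> c)", simplified] eq_commute)

lemma U_Suc: "U P (Suc n) a b = (\<Sum>e\<in>UNIV. P a e * U P n e (b - a))"
proof -
  let ?X = "star_approx P n"
  have "U P (Suc n) a b = (\<Sum>c\<in>UNIV. of_bool (b \<subseteq> c) * (\<Sum>d\<in>UNIV. of_bool (a \<union> d = c) * mat_mult P ?X a d))"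
    unfolding U_def by (simp add: par_id)
  also have "\<dots> = (\<Sum>d\<in>UNIV. \<Sum>c\<in>UNIV. of_bool (b \<subseteq> c) * (of_bool (a \<union> d = c) * mat_mult P ?X a d))"
    unfolding sum_distrib_left by (rule sum.swap)
  also have "\<dots> = (\<Sum>d\<in>UNIV. of_bool (b \<subseteq> a \<union> d) * mat_mult P ?X a d)"
  proof (rule sum.cong[OF refl])
    fix d
    have "(\<Sum>c\<in>UNIV. of_bool (b \<subseteq> c) * (of_bool (a \<union> d = c) * mat_mult P ?X a d))
        = (\<Sum>c\<in>UNIV. of_bool (a \<union> d = c) * (of_bool (b \<subseteq> c) * mat_mult P ?X a d))"
      by (simp add: mult_ac)
    also have "\<dots> = of_bool (b \<subseteq> a \<union> d) * mat_mult P ?X a d"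
      by (rule sum_of_bool_eq)
    finally show "(\<Sum>c\<in>UNIV. of_bool (b \<subseteq> c) * (of_bool (a \<union> d = c) * mat_mult P ?X a d))
        = of_bool (b \<subseteq> a \<union> d) * mat_mult P ?X a d" .
  qed
  also have "\<dots> = (\<Sum>d\<in>UNIV. \<Sum>e\<in>UNIV. P a e * (of_bool (b - a \<subseteq> d) * ?X e d))"
  proof (rule sum.cong[OF refl])
    fix d
    have "b \<subseteq> a \<union> d \<longleftrightarrow> b - a \<subseteq> d" by blast
    then show "of_bool (b \<subseteq> a \<union> d) * mat_mult P ?X a d = (\<Sum>e\<in>UNIV. P a e * (of_bool (b - a \<subseteq> d) * ?X e d))"
      unfolding mat_mult_def sum_distrib_left by (intro sum.cong refl) (simp add: mult_ac)
  qed
  also have "\<dots> = (\<Sum>e\<in>UNIV. P a e * U P n e (b - a))"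
    unfolding U_def sum_distrib_left by (rule sum.swap)
  finally show ?thesis .
qed

lemma U_mono:
  assumes "stoch P" shows "U P n a b \<le> U P (Suc n) a b"
proof (induction n arbitrary: a b)
  case 0
  show ?case
  proof (cases "b \<subseteq> a")
    case True
    then have ba: "b - a = {}" by blast
    show ?thesis using assms True unfolding U_Suc U_0 ba stoch_def by simp
  next
    case False
    then show ?thesis using assms unfolding U_Suc U_0 stoch_def by (simp add: sum_nonneg)
  qed
next
  case (Suc n)
  have e1: "U P (Suc (Suc n)) a b = (\<Sum>e\<in>UNIV. P a e * U P (Suc n) e (b - a))" by (rule U_Suc)
  have e2: "U P (Suc n) a b = (\<Sum>e\<in>UNIV. P a e * U P n e (b - a))" by (rule U_Suc)
  show ?case unfolding e1 e2
    using assms Suc unfolding stoch_def by (intro sum_mono mult_left_mono) auto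
qed

lemma U_le1:
  assumes "stoch P" shows "U P n a b \<le> 1"
proof -
  have st: "stoch (star_approx P n)" using assms by (rule stoch_star_approx)
  have "U P n a b \<le> (\<Sum>c\<in>UNIV. star_approx P n a c)"
    unfolding U_def using st unfolding stoch_def by (intro sum_mono) auto
  also have "\<dots> = 1" using st unfolding stoch_def by simp
  finally show ?thesis .
qed

lemma U_conv:
  assumes "stoch P" shows "convergent (\<lambda>n. U P n a b)"
proof -
  have inc: "incseq (\<lambda>n. U P n a b)" by (rule incseq_SucI) (rule U_mono[OF assms])
  have bd: "\<forall>i. U P i a b \<le> 1" using U_le1[OF assms] by blast
  obtain L where "(\<lambda>n. U P n a b) \<longlonglongrightarrow> L"
    using incseq_convergent[OF inc bd] by metis
  then show ?thesis unfolding convergent_def by blast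
qed

lemma U_split:
  "U P n a b = star_approx P n a b + (\<Sum>c\<in>{c. b \<subset> c}. star_approx P n a c)"
proof -
  have "U P n a b = (\<Sum>c\<in>{c. b \<subseteq> c}. star_approx P n a c)"
    unfolding U_def by (rule sum.mono_neutral_cong_right) auto
  also have "{c. b \<subseteq> c} = insert b {c. b \<subset> c}" by auto
  also have "(\<Sum>c\<in>insert b {c. b \<subset> c}. star_approx P n a c) = star_approx P n a b + (\<Sum>c\<in>{c. b \<subset> c}. star_approx P n a c)"
    by (rule sum.insert) auto
  finally show ?thesis .
qed

lemma X_conv:
  fixes P :: "('f::finite,'v::finite) mat"
  assumes "stoch P" shows "convergent (\<lambda>n. star_approx P n a b)"
proof (induction b rule: measure_induct_rule[where f="\<lambda>b. card (UNIV - b)"])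
  case (less b)
  have "\<And>c. c \<in> {c. b \<subset> c} \<Longrightarrow> convergent (\<lambda>n. star_approx P n a c)"
  proof -
    fix c assume "c \<in> {c. b \<subset> c}"
    then have "UNIV - c \<subset> UNIV - b" by blast
    then have "card (UNIV - c) < card (UNIV - b)" by (rule psubset_card_mono[rotated]) simp
    then show "convergent (\<lambda>n. star_approx P n a c)" by (rule less)
  qed
  then have "convergent (\<lambda>n. \<Sum>c\<in>{c. b \<subset> c}. star_approx P n a c)"
    by (rule convergent_sum)
  then have "convergent (\<lambda>n. U P n a b - (\<Sum>c\<in>{c. b \<subset> c}. star_approx P n a c))"
    using U_conv[OF assms] by (intro convergent_diff)
  then show ?case unfolding U_split by simp
qed


lemma stoch_Star:
  fixes P :: "('f::finite,'v::finite) mat"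
  assumes st: "stoch P"
  shows "stoch (\<lambda>a b. lim (\<lambda>n. star_approx P n a b))"
proof -
  have lim: "(\<lambda>n. star_approx P n a b) \<longlonglongrightarrow> lim (\<lambda>n. star_approx P n a b)" for a b
    using X_conv[OF st] by (simp add: convergent_LIMSEQ_iff)
  have nn: "0 \<le> lim (\<lambda>n. star_approx P n a b)" for a b
    using stoch_star_approx[OF st] unfolding stoch_def by (intro LIMSEQ_le_const[OF lim]) auto
  have "(\<lambda>n. \<Sum>b\<in>UNIV. star_approx P n a b) \<longlonglongrightarrow> (\<Sum>b\<in>UNIV. lim (\<lambda>n. star_approx P n a b))" for a
    by (intro tendsto_sum lim)
  moreover have "(\<lambda>n. \<Sum>b\<in>UNIV. star_approx P n a b) = (\<lambda>n. 1)" for a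
    using stoch_star_approx[OF st] unfolding stoch_def by simp
  ultimately have "(\<Sum>b\<in>UNIV. lim (\<lambda>n. star_approx P n a b)) = 1" for a
    using LIMSEQ_unique tendsto_const by metis
  with nn show ?thesis unfolding stoch_def by blast
qed

lemma stoch_B: "wf_prog p \<Longrightarrow> stoch (B p)"
proof (induction p)
  case (Filter t)
  then show ?case using Bpred_props[of t] by simp
next
  case (Assign f n)
  then show ?case unfolding stoch_def by (simp add: sum_of_bool_eq2)
next
  case (Par p q)
  then show ?case by (simp add: stoch_par)
next
  case (Seq p q)
  then show ?case by (simp add: stoch_mult)
next
  case (Choice p r q)
  then show ?case by (simp add: stoch_choice)
next
  case (Star p)
  then show ?case by (simp add: stoch_Star)
qed

theorem lemma4p1:
  fixes p :: "('f::finite, 'v::finite) prog"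
  assumes "wf_prog p"
  shows "(\<forall>s t. 0 \<le> S p s t) \<and> (\<forall>s. (\<Sum>t\<in>UNIV. S p s t) = 1)"
proof -
  have st: "stoch (B p)" using assms by (rule stoch_B)
  have nn: "0 \<le> S p s t" for s t
    using st unfolding stoch_def S_def by (auto simp: case_prod_beta)
  have "(\<Sum>t\<in>UNIV. S p s t) = 1" for s
  proof -
    obtain a b where s: "s = (a, b)" by fastforce
    have "(\<Sum>t\<in>UNIV. S p s t) = (\<Sum>a'\<in>UNIV. \<Sum>b'\<in>UNIV. of_bool (b' = b \<union> a) * B p a a')"
      unfolding s S_def sum.cartesian_product UNIV_Times_UNIV by (simp add: case_prod_beta)
    also have "\<dots> = (\<Sum>a'\<in>UNIV. B p a a')"
      by (simp add: sum_distrib_right[symmetric] sum_of_bool_eq2)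
    also have "\<dots> = 1" using st unfolding stoch_def by simp
    finally show ?thesis .
  qed
  with nn show ?thesis by blast
qed

end
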